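(* Consider a single element with nodes $1,\dots,N$ and SBP operators in $d$ directions: matrices $D^j\in\mathbb{R}^{N\times N}$ with $D^j\mathbf{1}=0$, a diagonal positive mass matrix $M$, and diagonal matrices $E^j=\operatorname{diag}(e^j_1,\dots,e^j_N)$ (the boundary operators $R^TBN^jR$) such that $MD^j+(D^j)^TM=E^j$ for $j=1,\dots,d$. Let $Y\subset\mathbb{R}^n$, $\omega\colon Y\to\mathbb{R}^n$, and for each $j$ let $f^j\colon Y\to\mathbb{R}^n$, $F^j\colon Y\to\mathbb{R}$, $H^j\colon Y\to\mathbb{R}^{n\times m}$, $g^j\colon Y\to\mathbb{R}^m$, $\psi^j=\omega\cdot f^j-F^j$; let $\alpha\in\mathbb{R}$. Let volume fluxes $f^{\mathrm{vol},j}$, $H^{\mathrm{vol},j}$ be symmetric and consistent with $f^j,H^j$, and surface fluxes $f^{\mathrm{num},j}$, $H^{\mathrm{num},j}$ be consistent with $f^j,H^j$, and assume both pairs satisfy, for all $u_-,u_+\in Y$ and all $j$, $$[\![\omega]\!]\cdot f^{\cdot,j}-\alpha\{\{\omega\}\}\cdot H^{\cdot,j}[\![g^j]\!]-(1-\alpha)\{\{\omega\cdot H^j\}\}[\![g^j]\!]=[\![\psi^j]\!].$$ Given nodal states $u_1,\dots,u_N\in Y$ and, for each node $k$ and direction $j$, an exterior state $u^+_{k,j}\in Y$, define $$\mathrm{VOL}_i=\sum_{j=1}^d\sum_{k=1}^N\Big(2D^j_{i,k}f^{\mathrm{vol},j}(u_i,u_k)+\alpha D^j_{i,k}H^{\mathrm{vol},j}(u_i,u_k)\big(g^j(u_k)-g^j(u_i)\big)+(1-\alpha)D^j_{i,k}H^j(u_i)\big(g^j(u_k)-g^j(u_i)\big)\Big),$$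 $$\mathrm{SURF}_i=M_{ii}^{-1}\sum_{j=1}^de^j_i\Big(f^{\mathrm{num},j}(u_i,u^+_{i,j})-f^j(u_i)+\tfrac\alpha2H^{\mathrm{num},j}(u_i,u^+_{i,j})\big(g^j(u^+_{i,j})-g^j(u_i)\big)+\tfrac{1-\alpha}2H^j(u_i)\big(g^j(u^+_{i,j})-g^j(u_i)\big)\Big),$$ and $\partial_tu_i=-\mathrm{VOL}_i-\mathrm{SURF}_i$. Then $$\sum_{i=1}^NM_{ii}\,\omega(u_i)\cdot\partial_tu_i=-\sum_{k=1}^N\sum_{j=1}^de^j_k\,F^{\mathrm{num},j}(u_k,u^+_{k,j}),$$ where $F^{\mathrm{num},j}=\{\{F^j\}\}+\{\{\omega\}\}\cdot f^{\mathrm{num},j}-\{\{\omega\cdot f^j\}\}-\tfrac\alpha4[\![\omega]\!]\cdot H^{\mathrm{num},j}[\![g^j]\!]-\tfrac{1-\alpha}4[\![\omega\cdot H^j]\!][\![g^j]\!]$, which is consistent: $F^{\mathrm{num},j}(u,u)=F^j(u)$.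
   Context: For a function $a$ on $Y$ and a pair of states $(u_-,u_+)$: $\{\{a\}\}=\tfrac12(a(u_-)+a(u_+))$, $[\![a]\!]=a(u_+)-a(u_-)$; two-point fluxes are evaluated at $(u_-,u_+)$; $\omega\cdot H^j=\omega^TH^j$. In applications $\omega=U'$ for an entropy $U$ with entropy fluxes $F^j$, $e^j_k$ is the boundary quadrature weight at node $k$ times the $j$-th component of the outward normal (zero at interior nodes), and $u^+_{k,j}$ is the neighboring element's trace; the identity expresses that the element entropy changes only by interface numerical entropy fluxes (entropy conservation). *)

theory Defs
  imports "HOL-Analysis.Analysis"
begin

text \<open>Conventions: nodes are indexed by {..<N}, directions by {..<d}.
  States live in real^'n, the auxiliary variable g^j in real^'m,
  H^j(u) is an n-by-m matrix (real^'m^'n).  omega . H = omega^T H is v*.\<close>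

definition Fnum ::
  "(real^'n \<Rightarrow> real^'n) \<Rightarrow> (real^'n \<Rightarrow> real^'n) \<Rightarrow> (real^'n \<Rightarrow> real)
   \<Rightarrow> (real^'n \<Rightarrow> real^'n \<Rightarrow> real^'n) \<Rightarrow> (real^'n \<Rightarrow> real^'m^'n)
   \<Rightarrow> (real^'n \<Rightarrow> real^'n \<Rightarrow> real^'m^'n) \<Rightarrow> (real^'n \<Rightarrow> real^'m) \<Rightarrow> real
   \<Rightarrow> real^'n \<Rightarrow> real^'n \<Rightarrow> real" where
  "Fnum \<omega> f F fn H Hn g \<alpha> a b =
     (F a + F b) / 2
     + ((1/2) *\<^sub>R (\<omega> a + \<omega> b)) \<bullet> fn a b
     - (\<omega> a \<bullet> f a + \<omega> b \<bullet> f b) / 2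
     - \<alpha> / 4 * ((\<omega> b - \<omega> a) \<bullet> (Hn a b *v (g b - g a)))
     - (1 - \<alpha>) / 4 * ((\<omega> b v* H b - \<omega> a v* H a) \<bullet> (g b - g a))"

definition entropy_conservative_pair ::
  "(real^'n) set \<Rightarrow> (real^'n \<Rightarrow> real^'n) \<Rightarrow> (real^'n \<Rightarrow> real^'n) \<Rightarrow> (real^'n \<Rightarrow> real)
   \<Rightarrow> (real^'n \<Rightarrow> real^'m^'n) \<Rightarrow> (real^'n \<Rightarrow> real^'m) \<Rightarrow> real
   \<Rightarrow> (real^'n \<Rightarrow> real^'n \<Rightarrow> real^'n) \<Rightarrow> (real^'n \<Rightarrow> real^'n \<Rightarrow> real^'m^'n) \<Rightarrow> bool" where
  "entropy_conservative_pair Y \<omega> f F H g \<alpha> fx Hx \<longleftrightarrow>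
    (\<forall>a\<in>Y. \<forall>b\<in>Y.
       (\<omega> b - \<omega> a) \<bullet> fx a b
       - \<alpha> * (((1/2) *\<^sub>R (\<omega> a + \<omega> b)) \<bullet> (Hx a b *v (g b - g a)))
       - (1 - \<alpha>) * (((1/2) *\<^sub>R (\<omega> a v* H a + \<omega> b v* H b)) \<bullet> (g b - g a))
     = (\<omega> b \<bullet> f b - F b) - (\<omega> a \<bullet> f a - F a))"

definition VOL ::
  "nat \<Rightarrow> nat \<Rightarrow> (nat \<Rightarrow> nat \<Rightarrow> nat \<Rightarrow> real) \<Rightarrow> real
   \<Rightarrow> (nat \<Rightarrow> real^'n \<Rightarrow> real^'n \<Rightarrow> real^'n) \<Rightarrow> (nat \<Rightarrow> real^'n \<Rightarrow> real^'n \<Rightarrow> real^'m^'n)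
   \<Rightarrow> (nat \<Rightarrow> real^'n \<Rightarrow> real^'m^'n) \<Rightarrow> (nat \<Rightarrow> real^'n \<Rightarrow> real^'m)
   \<Rightarrow> (nat \<Rightarrow> real^'n) \<Rightarrow> nat \<Rightarrow> real^'n" where
  "VOL N d D \<alpha> fvol Hvol H g u i =
    (\<Sum>j<d. \<Sum>k<N.
        (2 * D j i k) *\<^sub>R fvol j (u i) (u k)
      + (\<alpha> * D j i k) *\<^sub>R (Hvol j (u i) (u k) *v (g j (u k) - g j (u i)))
      + ((1 - \<alpha>) * D j i k) *\<^sub>R (H j (u i) *v (g j (u k) - g j (u i))))"

text \<open>Surface term SURF_i; up i j is the exterior state u^+_{i,j}.\<close>
definition SURF ::
  "nat \<Rightarrow> (nat \<Rightarrow> real) \<Rightarrow> (nat \<Rightarrow> nat \<Rightarrow> real) \<Rightarrow> real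
   \<Rightarrow> (nat \<Rightarrow> real^'n \<Rightarrow> real^'n) \<Rightarrow> (nat \<Rightarrow> real^'n \<Rightarrow> real^'n \<Rightarrow> real^'n)
   \<Rightarrow> (nat \<Rightarrow> real^'n \<Rightarrow> real^'n \<Rightarrow> real^'m^'n)
   \<Rightarrow> (nat \<Rightarrow> real^'n \<Rightarrow> real^'m^'n) \<Rightarrow> (nat \<Rightarrow> real^'n \<Rightarrow> real^'m)
   \<Rightarrow> (nat \<Rightarrow> real^'n) \<Rightarrow> (nat \<Rightarrow> nat \<Rightarrow> real^'n) \<Rightarrow> nat \<Rightarrow> real^'n" where
  "SURF d M e \<alpha> f fnum Hnum H g u up i =
    (1 / M i) *\<^sub>R (\<Sum>j<d. e j i *\<^sub>R
        (fnum j (u i) (up i j) - f j (u i)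
         + (\<alpha> / 2) *\<^sub>R (Hnum j (u i) (up i j) *v (g j (up i j) - g j (u i)))
         + ((1 - \<alpha>) / 2) *\<^sub>R (H j (u i) *v (g j (up i j) - g j (u i)))))"

end

theory Submission
  imports Defs
begin

lemma abstract_sum:
  fixes Q T :: "nat \<Rightarrow> nat \<Rightarrow> real" and E c \<psi> :: "nat \<Rightarrow> real"
  assumes Qs: "\<And>i k. i < N \<Longrightarrow> k < N \<Longrightarrow> Q i k + Q k i = (if i = k then E i else 0)"
    and Qr: "\<And>i. i < N \<Longrightarrow> (\<Sum>k<N. Q i k) = 0"
    and Td: "\<And>i. i < N \<Longrightarrow> T i i = 2 * c i"
    and Ta: "\<And>i k. i < N \<Longrightarrow> k < N \<Longrightarrow> T i k - T k i = -2 * (\<psi> k - \<psi> i)"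
  shows "(\<Sum>i<N. \<Sum>k<N. Q i k * T i k) = (\<Sum>i<N. E i * (c i - \<psi> i))"
proof -
  let ?S = "\<Sum>i<N. \<Sum>k<N. Q i k * T i k"
  have 1: "?S = (\<Sum>i<N. \<Sum>k<N. ((if i = k then E i else 0) - Q k i) * T i k)"
    by (intro sum.cong refl) (simp add: Qs[symmetric])
  also have "\<dots> = (\<Sum>i<N. \<Sum>k<N. (if i = k then E i * T i k else 0)) - (\<Sum>i<N. \<Sum>k<N. Q k i * T i k)"
  proof -
    have "\<And>i k. ((if i = k then E i else 0) - Q k i) * T i k = (if i = k then E i * T i k else 0) - Q k i * T i k"
      by (simp add: left_diff_distrib)
    thus ?thesis by (simp only: sum_subtractf)
  qed
  also have "(\<Sum>i<N. \<Sum>k<N. (if i = k then E i * T i k else 0)) = (\<Sum>i<N. E i * 2 * c i)"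
    by (intro sum.cong refl) (simp add: Td)
  also have "(\<Sum>i<N. \<Sum>k<N. Q k i * T i k) = (\<Sum>i<N. \<Sum>k<N. Q i k * T k i)"
    by (rule sum.swap)
  also have "\<dots> = (\<Sum>i<N. \<Sum>k<N. Q i k * T i k + 2 * (Q i k * \<psi> k) - 2 * (Q i k * \<psi> i))"
    by (intro sum.cong refl) (smt (verit, best) Ta lessThan_iff right_diff_distrib)
  also have "\<dots> = ?S + 2 * (\<Sum>i<N. \<Sum>k<N. Q i k * \<psi> k) - 2 * (\<Sum>i<N. \<psi> i * (\<Sum>k<N. Q i k))"
    by (simp add: sum.distrib sum_subtractf sum_distrib_left mult.commute mult.left_commute)
  also have "(\<Sum>i<N. \<psi> i * (\<Sum>k<N. Q i k)) = 0" by (simp add: Qr)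
  also have "(\<Sum>i<N. \<Sum>k<N. Q i k * \<psi> k) = (\<Sum>k<N. \<psi> k * (\<Sum>i<N. Q i k))"
    by (subst sum.swap) (simp add: sum_distrib_left mult.commute)
  also have "\<dots> = (\<Sum>k<N. \<psi> k * (\<Sum>i<N. (if k = i then E k else 0) - Q k i))"
    by (intro sum.cong refl arg_cong2[where f="(*)"]) (simp add: Qs[symmetric])
  also have "\<dots> = (\<Sum>k<N. \<psi> k * E k)"
    by (simp add: sum_subtractf Qr)
  finally have "?S = (\<Sum>i<N. E i * 2 * c i) - (?S + 2 * (\<Sum>k<N. \<psi> k * E k) - 2 * 0)" .
  hence "2 * ?S = 2 * ((\<Sum>i<N. E i * c i) - (\<Sum>k<N. \<psi> k * E k))"
    by (simp add: sum_distrib_left mult.commute mult.left_commute algebra_simps)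
  thus ?thesis by (simp add: sum_subtractf algebra_simps)
qed
theorem mainTheorem17:
  fixes N d :: nat
    and D :: "nat \<Rightarrow> nat \<Rightarrow> nat \<Rightarrow> real"
    and M :: "nat \<Rightarrow> real"
    and e :: "nat \<Rightarrow> nat \<Rightarrow> real"
    and Y :: "(real^'n) set"
    and \<omega> :: "real^'n \<Rightarrow> real^'n"
    and f :: "nat \<Rightarrow> real^'n \<Rightarrow> real^'n"
    and F :: "nat \<Rightarrow> real^'n \<Rightarrow> real"
    and H :: "nat \<Rightarrow> real^'n \<Rightarrow> real^'m^'n"
    and g :: "nat \<Rightarrow> real^'n \<Rightarrow> real^'m"
    and \<alpha> :: real
    and fvol fnum :: "nat \<Rightarrow> real^'n \<Rightarrow> real^'n \<Rightarrow> real^'n"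
    and Hvol Hnum :: "nat \<Rightarrow> real^'n \<Rightarrow> real^'n \<Rightarrow> real^'m^'n"
    and u :: "nat \<Rightarrow> real^'n"
    and up :: "nat \<Rightarrow> nat \<Rightarrow> real^'n"
    and dudt :: "nat \<Rightarrow> real^'n"
  assumes D_one: "\<forall>j<d. \<forall>i<N. (\<Sum>k<N. D j i k) = 0"
    and M_pos: "\<forall>i<N. M i > 0"
    and SBP: "\<forall>j<d. \<forall>i<N. \<forall>k<N.
                 M i * D j i k + D j k i * M k = (if i = k then e j i else 0)"
    and fvol_sym: "\<forall>j<d. \<forall>a\<in>Y. \<forall>b\<in>Y. fvol j a b = fvol j b a"
    and Hvol_sym: "\<forall>j<d. \<forall>a\<in>Y. \<forall>b\<in>Y. Hvol j a b = Hvol j b a"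
    and fvol_cons: "\<forall>j<d. \<forall>a\<in>Y. fvol j a a = f j a"
    and Hvol_cons: "\<forall>j<d. \<forall>a\<in>Y. Hvol j a a = H j a"
    and fnum_cons: "\<forall>j<d. \<forall>a\<in>Y. fnum j a a = f j a"
    and Hnum_cons: "\<forall>j<d. \<forall>a\<in>Y. Hnum j a a = H j a"
    and EC_vol: "\<forall>j<d. entropy_conservative_pair Y \<omega> (f j) (F j) (H j) (g j) \<alpha> (fvol j) (Hvol j)"
    and EC_num: "\<forall>j<d. entropy_conservative_pair Y \<omega> (f j) (F j) (H j) (g j) \<alpha> (fnum j) (Hnum j)"
    and u_Y: "\<forall>i<N. u i \<in> Y"
    and up_Y: "\<forall>k<N. \<forall>j<d. up k j \<in> Y"
    and dudt_def: "\<forall>i<N. dudt i =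
        - VOL N d D \<alpha> fvol Hvol H g u i - SURF d M e \<alpha> f fnum Hnum H g u up i"
  shows "(\<Sum>i<N. M i * (\<omega> (u i) \<bullet> dudt i))
           = - (\<Sum>k<N. \<Sum>j<d. e j k * Fnum \<omega> (f j) (F j) (fnum j) (H j) (Hnum j) (g j) \<alpha> (u k) (up k j))
         \<and> (\<forall>j<d. \<forall>a\<in>Y. Fnum \<omega> (f j) (F j) (fnum j) (H j) (Hnum j) (g j) \<alpha> a a = F j a)"
proof
  show "\<forall>j<d. \<forall>a\<in>Y. Fnum \<omega> (f j) (F j) (fnum j) (H j) (Hnum j) (g j) \<alpha> a a = F j a"
  proof (intro allI impI ballI)
    fix j a assume "j < d" "a \<in> Y"
    moreover have "(1/2) *\<^sub>R (\<omega> a + \<omega> a) = \<omega> a"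
      by (simp add: scaleR_2[symmetric])
    ultimately show "Fnum \<omega> (f j) (F j) (fnum j) (H j) (Hnum j) (g j) \<alpha> a a = F j a"
      using fnum_cons by (simp add: Fnum_def)
  qed
next
  define w where "w i = \<omega> (u i)" for i
  define T where "T j i k = 2 * (w i \<bullet> fvol j (u i) (u k))
     + \<alpha> * (w i \<bullet> (Hvol j (u i) (u k) *v (g j (u k) - g j (u i))))
     + (1 - \<alpha>) * (w i \<bullet> (H j (u i) *v (g j (u k) - g j (u i))))" for j i k
  define S where "S j i = fnum j (u i) (up i j) - f j (u i)
         + (\<alpha> / 2) *\<^sub>R (Hnum j (u i) (up i j) *v (g j (up i j) - g j (u i)))
         + ((1 - \<alpha>) / 2) *\<^sub>R (H j (u i) *v (g j (up i j) - g j (u i)))" for j i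
  have volj: "(\<Sum>i<N. \<Sum>k<N. (M i * D j i k) * T j i k) = (\<Sum>i<N. e j i * F j (u i))"
    if j: "j < d" for j
  proof -
    have "(\<Sum>i<N. \<Sum>k<N. (M i * D j i k) * T j i k)
        = (\<Sum>i<N. e j i * (w i \<bullet> f j (u i) - (w i \<bullet> f j (u i) - F j (u i))))"
    proof (rule abstract_sum)
      fix i k assume i: "i < N" and k: "k < N"
      show "M i * D j i k + M k * D j k i = (if i = k then e j i else 0)"
        using SBP j i k by (simp add: mult.commute)
      have ui: "u i \<in> Y" and uk: "u k \<in> Y" using u_Y i k by auto
      have ec: "(w k - w i) \<bullet> fvol j (u i) (u k)
       - \<alpha> * (((1/2) *\<^sub>R (w i + w k)) \<bullet> (Hvol j (u i) (u k) *v (g j (u k) - g j (u i))))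
       - (1 - \<alpha>) * (((1/2) *\<^sub>R (w i v* H j (u i) + w k v* H j (u k))) \<bullet> (g j (u k) - g j (u i)))
     = (w k \<bullet> f j (u k) - F j (u k)) - (w i \<bullet> f j (u i) - F j (u i))"
        using EC_vol j ui uk unfolding entropy_conservative_pair_def w_def by blast
      have sy1: "fvol j (u k) (u i) = fvol j (u i) (u k)" using fvol_sym j ui uk by auto
      have sy2: "Hvol j (u k) (u i) = Hvol j (u i) (u k)" using Hvol_sym j ui uk by auto
      have neg: "\<And>A :: real^'m^'n. A *v (g j (u i) - g j (u k)) = - (A *v (g j (u k) - g j (u i)))"
        by (simp add: matrix_vector_mult_diff_distrib)
      define a where "a = w i \<bullet> fvol j (u i) (u k)"
      define b where "b = w k \<bullet> fvol j (u i) (u k)"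
      define c where "c = w i \<bullet> (Hvol j (u i) (u k) *v (g j (u k) - g j (u i)))"
      define c' where "c' = w k \<bullet> (Hvol j (u i) (u k) *v (g j (u k) - g j (u i)))"
      define h where "h = w i \<bullet> (H j (u i) *v (g j (u k) - g j (u i)))"
      define h' where "h' = w k \<bullet> (H j (u k) *v (g j (u k) - g j (u i)))"
      have Tik: "T j i k = 2 * a + \<alpha> * c + (1 - \<alpha>) * h" unfolding T_def a_def c_def h_def ..
      have Tki: "T j k i = 2 * b - \<alpha> * c' - (1 - \<alpha>) * h'"
        unfolding T_def b_def c'_def h'_def sy1 sy2 neg by simp
      have e1: "(w k - w i) \<bullet> fvol j (u i) (u k) = b - a" by (simp add: a_def b_def inner_diff_left)
      have e2: "((1/2) *\<^sub>R (w i + w k)) \<bullet> (Hvol j (u i) (u k) *v (g j (u k) - g j (u i))) = (c + c') / 2"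
        by (simp add: c_def c'_def inner_add_left)
      have e3: "((1/2) *\<^sub>R (w i v* H j (u i) + w k v* H j (u k))) \<bullet> (g j (u k) - g j (u i)) = (h + h') / 2"
        by (simp add: h_def h'_def inner_add_left dot_lmul_matrix)
      have lin: "(2 * a + \<alpha> * c + (1 - \<alpha>) * h) - (2 * b - \<alpha> * c' - (1 - \<alpha>) * h') = -2 * ((b - a) - \<alpha> * ((c + c') / 2) - (1 - \<alpha>) * ((h + h') / 2))"
        by (simp add: field_simps)
      show "T j i k - T j k i = -2 * ((w k \<bullet> f j (u k) - F j (u k)) - (w i \<bullet> f j (u i) - F j (u i)))"
        unfolding Tik Tki lin using ec unfolding e1 e2 e3 by simp
    next
      fix i assume i: "i < N"
      show "(\<Sum>k<N. M i * D j i k) = 0" using D_one j i by (simp add: sum_distrib_left[symmetric])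
      have ui: "u i \<in> Y" using u_Y i by auto
      show "T j i i = 2 * (w i \<bullet> f j (u i))"
        using fvol_cons j ui by (simp add: T_def)
    qed
    thus ?thesis by simp
  qed
  have surfij: "e j i * (F j (u i) + w i \<bullet> S j i)
      = e j i * Fnum \<omega> (f j) (F j) (fnum j) (H j) (Hnum j) (g j) \<alpha> (u i) (up i j)"
    if j: "j < d" and i: "i < N" for i j
  proof -
    have ui: "u i \<in> Y" and up: "up i j \<in> Y" using u_Y up_Y i j by auto
    have ec: "(\<omega> (up i j) - w i) \<bullet> fnum j (u i) (up i j)
       - \<alpha> * (((1/2) *\<^sub>R (w i + \<omega> (up i j))) \<bullet> (Hnum j (u i) (up i j) *v (g j (up i j) - g j (u i))))
       - (1 - \<alpha>) * (((1/2) *\<^sub>R (w i v* H j (u i) + \<omega> (up i j) v* H j (up i j))) \<bullet> (g j (up i j) - g j (u i)))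
     = (\<omega> (up i j) \<bullet> f j (up i j) - F j (up i j)) - (w i \<bullet> f j (u i) - F j (u i))"
      using EC_num j ui up unfolding entropy_conservative_pair_def w_def by blast
    define v where "v = \<omega> (up i j)"
    define \<Delta> where "\<Delta> = g j (up i j) - g j (u i)"
    define a where "a = w i \<bullet> fnum j (u i) (up i j)"
    define b where "b = v \<bullet> fnum j (u i) (up i j)"
    define c where "c = w i \<bullet> (Hnum j (u i) (up i j) *v \<Delta>)"
    define c' where "c' = v \<bullet> (Hnum j (u i) (up i j) *v \<Delta>)"
    define h where "h = w i \<bullet> (H j (u i) *v \<Delta>)"
    define h' where "h' = v \<bullet> (H j (up i j) *v \<Delta>)"
    define fi where "fi = w i \<bullet> f j (u i)"
    define fp where "fp = v \<bullet> f j (up i j)"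
    define Fi where "Fi = F j (u i)"
    define Fp where "Fp = F j (up i j)"
    have ws: "w i \<bullet> S j i = a - fi + \<alpha> / 2 * c + (1 - \<alpha>) / 2 * h"
      unfolding S_def a_def fi_def c_def h_def \<Delta>_def
      by (simp add: inner_add_right inner_diff_right inner_scaleR_right)
    have fn: "Fnum \<omega> (f j) (F j) (fnum j) (H j) (Hnum j) (g j) \<alpha> (u i) (up i j)
      = (Fi + Fp) / 2 + (a + b) / 2 - (fi + fp) / 2 - \<alpha> / 4 * (c' - c) - (1 - \<alpha>) / 4 * (h' - h)"
      unfolding Fnum_def w_def[symmetric] v_def[symmetric] \<Delta>_def[symmetric]
      by (simp add: a_def b_def c_def c'_def h_def h'_def fi_def fp_def Fi_def Fp_def
          inner_add_left inner_diff_left dot_lmul_matrix add_divide_distrib)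
    have ec': "(b - a) - \<alpha> * ((c + c') / 2) - (1 - \<alpha>) * ((h + h') / 2) = (fp - Fp) - (fi - Fi)"
      using ec unfolding v_def[symmetric] \<Delta>_def[symmetric]
      by (simp add: a_def b_def c_def c'_def h_def h'_def fi_def fp_def Fi_def Fp_def
          inner_add_left inner_diff_left dot_lmul_matrix)
    have lin: "Fi + (a - fi + \<alpha> / 2 * c + (1 - \<alpha>) / 2 * h)
      = (Fi + Fp) / 2 + (a + b) / 2 - (fi + fp) / 2 - \<alpha> / 4 * (c' - c) - (1 - \<alpha>) / 4 * (h' - h)
        - (((b - a) - \<alpha> * ((c + c') / 2) - (1 - \<alpha>) * ((h + h') / 2)) - ((fp - Fp) - (fi - Fi))) / 2"
      by (simp add: field_simps)
    have "F j (u i) + w i \<bullet> S j i = Fnum \<omega> (f j) (F j) (fnum j) (H j) (Hnum j) (g j) \<alpha> (u i) (up i j)"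
      unfolding ws fn Fi_def[symmetric] lin ec' by simp
    thus ?thesis by simp
  qed
  have volsum: "(\<Sum>i<N. M i * (w i \<bullet> VOL N d D \<alpha> fvol Hvol H g u i))
      = (\<Sum>i<N. \<Sum>j<d. e j i * F j (u i))"
  proof -
    have "(\<Sum>i<N. M i * (w i \<bullet> VOL N d D \<alpha> fvol Hvol H g u i))
        = (\<Sum>i<N. \<Sum>j<d. \<Sum>k<N. (M i * D j i k) * T j i k)"
      unfolding VOL_def T_def
      by (simp add: inner_sum_right sum_distrib_left inner_add_right inner_scaleR_right algebra_simps)
    also have "\<dots> = (\<Sum>j<d. \<Sum>i<N. \<Sum>k<N. (M i * D j i k) * T j i k)"
      by (rule sum.swap)
    also have "\<dots> = (\<Sum>j<d. \<Sum>i<N. e j i * F j (u i))"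
      by (rule sum.cong[OF refl]) (simp add: volj)
    also have "\<dots> = (\<Sum>i<N. \<Sum>j<d. e j i * F j (u i))"
      by (rule sum.swap)
    finally show ?thesis .
  qed
  have surfsum: "(\<Sum>i<N. M i * (w i \<bullet> SURF d M e \<alpha> f fnum Hnum H g u up i))
      = (\<Sum>i<N. \<Sum>j<d. e j i * (w i \<bullet> S j i))"
  proof (intro sum.cong refl)
    fix i assume "i \<in> {..<N}"
    hence "M i \<noteq> 0" using M_pos by auto
    thus "M i * (w i \<bullet> SURF d M e \<alpha> f fnum Hnum H g u up i) = (\<Sum>j<d. e j i * (w i \<bullet> S j i))"
      unfolding SURF_def S_def by (simp add: inner_sum_right inner_scaleR_right)
  qed
  have "(\<Sum>i<N. M i * (\<omega> (u i) \<bullet> dudt i))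
     = - (\<Sum>i<N. M i * (w i \<bullet> VOL N d D \<alpha> fvol Hvol H g u i))
       - (\<Sum>i<N. M i * (w i \<bullet> SURF d M e \<alpha> f fnum Hnum H g u up i))"
    unfolding sum_negf[symmetric] sum_subtractf[symmetric]
  proof (rule sum.cong[OF refl])
    fix i assume "i \<in> {..<N}"
    thus "M i * (\<omega> (u i) \<bullet> dudt i) = - (M i * (w i \<bullet> VOL N d D \<alpha> fvol Hvol H g u i))
       - M i * (w i \<bullet> SURF d M e \<alpha> f fnum Hnum H g u up i)"
    proof -
      have dd: "dudt i = - VOL N d D \<alpha> fvol Hvol H g u i - SURF d M e \<alpha> f fnum Hnum H g u up i"
        using dudt_def \<open>i \<in> {..<N}\<close> by auto
      show ?thesis unfolding dd w_def by (simp add: inner_diff_right algebra_simps)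
    qed
  qed
  also have "\<dots> = - (\<Sum>i<N. \<Sum>j<d. e j i * (F j (u i) + w i \<bullet> S j i))"
    unfolding volsum surfsum by (simp add: distrib_left sum.distrib)
  also have "\<dots> = - (\<Sum>k<N. \<Sum>j<d. e j k * Fnum \<omega> (f j) (F j) (fnum j) (H j) (Hnum j) (g j) \<alpha> (u k) (up k j))"
    by (simp add: surfij)
  finally show "(\<Sum>i<N. M i * (\<omega> (u i) \<bullet> dudt i))
     = - (\<Sum>k<N. \<Sum>j<d. e j k * Fnum \<omega> (f j) (F j) (fnum j) (H j) (Hnum j) (g j) \<alpha> (u k) (up k j))" .
qed

end
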